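(* Let $n$ be a square-free integer with $n\neq 1$ and let $\lambda\geq 1$ be an integer. The action of the Hecke group $H(\lambda)$ on $\mathbb{Q}^*(\sqrt{n})$ has finitely many orbits if and only if $\lambda\in\{1,2\}$.
   Context: For a square-free integer $n\neq 1$, $\mathbb{Q}^*(\sqrt{n})=\left\{\frac{a+\sqrt{n}}{c}\;:\;a,c\in\mathbb{Z},\ c\neq 0,\ \frac{a^2-n}{c}\in\mathbb{Z}\right\}\subset\mathbb{Q}(\sqrt n)$ (inside $\mathbb{C}$ when $n<0$). For an integer $\lambda\geq 1$, $H(\lambda)$ is the group of linear fractional transformations generated by $x:z\mapsto -1/z$ and $w_\lambda:z\mapsto z+\lambda$; it acts on $\mathbb{Q}^*(\sqrt n)$ (both generators map $\mathbb{Q}^*(\sqrt n)$ into itself). *)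

theory Defs
  imports Complex_Main "HOL-Computational_Algebra.Squarefree"
begin

text \<open>Q*(sqrt n) as a subset of the complex numbers (csqrt n = i sqrt(-n) for n < 0).\<close>
definition Qstar :: "int \<Rightarrow> complex set" where
  "Qstar n = {(of_int a + csqrt (of_int n)) / of_int c | a c.
               c \<noteq> 0 \<and> c dvd (a^2 - n)}"

inductive_set hecke_group :: "int \<Rightarrow> (complex \<Rightarrow> complex) set" for lam :: int where
  hg_id: "id \<in> hecke_group lam"
| hg_x: "g \<in> hecke_group lam \<Longrightarrow> (\<lambda>z. - 1 / z) \<circ> g \<in> hecke_group lam"
| hg_w: "g \<in> hecke_group lam \<Longrightarrow> (\<lambda>z. z + of_int lam) \<circ> g \<in> hecke_group lam"
| hg_winv: "g \<in> hecke_group lam \<Longrightarrow> (\<lambda>z. z - of_int lam) \<circ> g \<in> hecke_group lam"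

definition hecke_orbit :: "int \<Rightarrow> complex \<Rightarrow> complex set" where
  "hecke_orbit lam z = {g z | g. g \<in> hecke_group lam}"

definition hecke_orbits :: "int \<Rightarrow> int \<Rightarrow> complex set set" where
  "hecke_orbits n lam = hecke_orbit lam ` Qstar n"

end

theory Submission
  imports Defs
begin

lemma nonsq:
  fixes n :: int assumes "squarefree n" "n \<noteq> 1" shows "a^2 \<noteq> n"
proof
  assume h: "a^2 = n"
  then have "a dvd 1" using squarefreeD[OF assms(1), of a] by simp
  then have "a^2 = 1" by (metis is_unit_power_iff power_one_right unit_imp_dvd dvd_antisym zdvd1_eq abs_power2 power2_abs one_power2 abs_one)
  with h assms show False by simp
qed

lemma bound:
  fixes a b c n :: int
  assumes "c \<noteq> 0" "\<bar>a\<bar> \<le> \<bar>c\<bar>" "b*c = a^2 - n" "\<bar>b\<bar> \<ge> \<bar>c\<bar>" "n \<noteq> 0"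
  shows "\<bar>c\<bar> \<le> \<bar>n\<bar> \<and> \<bar>a\<bar> \<le> \<bar>n\<bar>"
proof -
  have "\<bar>c\<bar> * 1 \<le> \<bar>c\<bar> * \<bar>c\<bar>" using assms(1) by (intro mult_left_mono) auto
  then have cc: "\<bar>c\<bar> \<le> c^2" by (simp add: power2_eq_square abs_mult_self_eq)
  have "\<bar>c\<bar> * \<bar>c\<bar> \<le> \<bar>b\<bar> * \<bar>c\<bar>" using assms(4) by (intro mult_right_mono) auto
  then have bc: "c^2 \<le> \<bar>b*c\<bar>" by (simp add: abs_mult power2_eq_square abs_mult_self_eq)
  have "\<bar>c\<bar> \<le> \<bar>n\<bar>"
  proof (cases "n > 0")
    case True
    have a2: "a^2 \<le> c^2" using assms(2) by (simp add: abs_le_square_iff)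
    have "b*c < 0"
    proof (rule ccontr)
      assume "\<not> b*c < 0"
      then have "\<bar>b*c\<bar> = b*c" by simp
      with bc assms(3) a2 True show False by linarith
    qed
    then have "\<bar>b*c\<bar> = n - a^2" using assms(3) by simp
    moreover have "0 \<le> a^2" by simp
    ultimately show ?thesis using bc cc True abs_of_pos[OF True] by linarith
  next
    case False
    then have n0: "n < 0" using assms(5) by simp
    then have "b*c > 0" using assms(3) zero_le_power2[of a] by linarith
    then have e: "c^2 \<le> a^2 - n" using bc assms(3) by simp
    show ?thesis
    proof (cases "\<bar>a\<bar> < \<bar>c\<bar>")
      case True
      have "c^2 - a^2 = (\<bar>c\<bar> - \<bar>a\<bar>) * (\<bar>c\<bar> + \<bar>a\<bar>)" by (simp add: algebra_simps power2_eq_square abs_mult_self_eq)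
      also have "\<dots> \<ge> 1 * (\<bar>c\<bar> + \<bar>a\<bar>)" using True by (intro mult_right_mono) auto
      finally have X: "\<bar>c\<bar> + \<bar>a\<bar> \<le> c^2 - a^2" by simp
      have "\<bar>c\<bar> \<le> -n" using e X abs_ge_zero[of a] by linarith
      then show ?thesis using n0 by simp
    next
      case False
      then have "\<bar>a\<bar> = \<bar>c\<bar>" using assms(2) by simp
      then have "a^2 = c^2" by (metis power2_abs)
      then have "n = c * (c - b)" using assms(3) by (simp add: power2_eq_square algebra_simps)
      then have "c dvd n" by (metis dvdI)
      then show ?thesis using assms(5) by (simp add: dvd_imp_le_int)
    qed
  qed
  with assms(2) show ?thesis by linarith
qed


lemma hg_comp: "h \<in> hecke_group lam \<Longrightarrow> g \<in> hecke_group lam \<Longrightarrow> h \<circ> g \<in> hecke_group lam"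
proof (induction h rule: hecke_group.induct)
  case hg_id then show ?case by simp
next
  case (hg_x h) then show ?case by (metis comp_assoc hecke_group.hg_x)
next
  case (hg_w h) then show ?case by (metis comp_assoc hecke_group.hg_w)
next
  case (hg_winv h) then show ?case by (metis comp_assoc hecke_group.hg_winv)
qed

lemma gen_x: "(\<lambda>z::complex. - 1 / z) \<in> hecke_group lam"
  using hecke_group.hg_x[OF hecke_group.hg_id, of lam] unfolding comp_id .
lemma gen_w: "(\<lambda>z::complex. z + of_int lam) \<in> hecke_group lam"
  using hecke_group.hg_w[OF hecke_group.hg_id, of lam] unfolding comp_id .
lemma gen_winv: "(\<lambda>z::complex. z - of_int lam) \<in> hecke_group lam"
  using hecke_group.hg_winv[OF hecke_group.hg_id, of lam] unfolding comp_id .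

lemma hg_inv: "g \<in> hecke_group lam \<Longrightarrow> \<exists>h\<in>hecke_group lam. \<forall>z. h (g z) = z"
proof (induction g rule: hecke_group.induct)
  case hg_id then show ?case by (metis hecke_group.hg_id id_apply)
next
  case (hg_x g)
  then obtain h where h: "h \<in> hecke_group lam" "\<forall>z. h (g z) = z" by blast
  have "h \<circ> (\<lambda>z::complex. - 1 / z) \<in> hecke_group lam" by (rule hg_comp[OF h(1) gen_x])
  then show ?case using h(2) by (intro bexI[of _ "h \<circ> (\<lambda>z::complex. - 1 / z)"]) auto
next
  case (hg_w g)
  then obtain h where h: "h \<in> hecke_group lam" "\<forall>z. h (g z) = z" by blast
  have "h \<circ> (\<lambda>z::complex. z - of_int lam) \<in> hecke_group lam" by (rule hg_comp[OF h(1) gen_winv])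
  then show ?case using h(2) by (intro bexI[of _ "h \<circ> (\<lambda>z::complex. z - of_int lam)"]) auto
next
  case (hg_winv g)
  then obtain h where h: "h \<in> hecke_group lam" "\<forall>z. h (g z) = z" by blast
  have "h \<circ> (\<lambda>z::complex. z + of_int lam) \<in> hecke_group lam" by (rule hg_comp[OF h(1) gen_w])
  then show ?case using h(2) by (intro bexI[of _ "h \<circ> (\<lambda>z::complex. z + of_int lam)"]) auto
qed

lemma orbit_eq:
  assumes "g \<in> hecke_group lam" shows "hecke_orbit lam (g z) = hecke_orbit lam z"
proof
  show "hecke_orbit lam (g z) \<subseteq> hecke_orbit lam z"
    unfolding hecke_orbit_def using hg_comp[OF _ assms] by (auto, metis comp_apply)
next
  obtain h where h: "h \<in> hecke_group lam" "\<forall>z. h (g z) = z" using hg_inv[OF assms] by blast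
  show "hecke_orbit lam z \<subseteq> hecke_orbit lam (g z)"
    unfolding hecke_orbit_def using hg_comp[OF _ h(1)] h(2) by (auto, metis comp_apply)
qed

lemma trans_nat: "g \<in> hecke_group lam \<Longrightarrow>
   (\<lambda>z. z + of_int (int j * lam)) \<circ> g \<in> hecke_group lam \<and> (\<lambda>z. z - of_int (int j * lam)) \<circ> g \<in> hecke_group lam"
proof (induction j)
  case 0 then show ?case by (simp add: comp_def)
next
  case (Suc j)
  then have "(\<lambda>z. z + of_int lam) \<circ> ((\<lambda>z. z + of_int (int j * lam)) \<circ> g) \<in> hecke_group lam"
    "(\<lambda>z. z - of_int lam) \<circ> ((\<lambda>z. z - of_int (int j * lam)) \<circ> g) \<in> hecke_group lam"
    using hecke_group.hg_w hecke_group.hg_winv by blast+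
  moreover have "(\<lambda>z. z + of_int lam) \<circ> ((\<lambda>z. z + of_int (int j * lam)) \<circ> g) = (\<lambda>z. z + of_int (int (Suc j) * lam)) \<circ> g"
    "(\<lambda>z. z - of_int lam) \<circ> ((\<lambda>z. z - of_int (int j * lam)) \<circ> g) = (\<lambda>z. z - of_int (int (Suc j) * lam)) \<circ> g"
    by (auto simp: fun_eq_iff algebra_simps)
  ultimately show ?case by metis
qed

lemma trans_int: fixes k :: int shows "(\<lambda>z. z + of_int (k * lam)) \<in> hecke_group lam"
proof (cases "k \<ge> 0")
  case True
  define j where "j = nat k"
  have "k = int j" using True unfolding j_def by simp
  then have eq: "(\<lambda>z. z + of_int (k * lam)) = (\<lambda>z. z + of_int (int j * lam))" by simp
  have "(\<lambda>z. z + of_int (int j * lam)) \<circ> id \<in> hecke_group lam"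
    using trans_nat[OF hecke_group.hg_id, where j=j and lam=lam] by blast
  then show ?thesis unfolding eq comp_id .
next
  case False
  define j where "j = nat (-k)"
  have j: "k = - int j" using False unfolding j_def by simp
  have eq: "(\<lambda>z. z + of_int (k * lam)) = (\<lambda>z. z - of_int (int j * lam))" using j by (auto simp: fun_eq_iff)
  have "(\<lambda>z. z - of_int (int j * lam)) \<circ> id \<in> hecke_group lam"
    using trans_nat[OF hecke_group.hg_id, where j=j and lam=lam] by blast
  then show ?thesis unfolding eq comp_id .
qed


lemma nz: assumes "\<forall>a::int. a^2 \<noteq> n" shows "of_int a + csqrt (of_int n) \<noteq> 0"
proof
  assume "of_int a + csqrt (of_int n) = 0"
  then have "csqrt (of_int n) = - of_int a" by (metis add.commute eq_neg_iff_add_eq_0)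
  then have "(of_int n :: complex) = of_int (a^2)" by (metis power2_csqrt of_int_power power2_minus)
  then have "n = a^2" using of_int_eq_iff by blast
  with assms show False by blast
qed

lemma S_formula:
  assumes ns: "\<forall>a::int. a^2 \<noteq> n" and c: "c \<noteq> 0" and bc: "b*c = a^2 - n"
  shows "- 1 / ((of_int a + csqrt (of_int n)) / of_int c) = (of_int (-a) + csqrt (of_int n)) / of_int b"
proof -
  let ?s = "csqrt (of_int n)"
  have b: "b \<noteq> 0" using bc ns by auto
  have "(of_int (-a) + ?s) * (of_int a + ?s) = ?s^2 - of_int a ^2" by (simp add: algebra_simps power2_eq_square)
  also have "\<dots> = - of_int (b*c)" using bc by simp
  finally have e: "(of_int (-a) + ?s) * (of_int a + ?s) = - (of_int b * of_int c)" by simp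
  have nz1: "of_int a + ?s \<noteq> 0" using nz[OF ns] .
  show ?thesis using e nz1 b c by (simp add: field_simps)
qed

lemma T_formula:
  assumes "c \<noteq> 0"
  shows "(of_int a + csqrt (of_int n)) / of_int c + of_int (k*lam) = (of_int (a + k*lam*c) + csqrt (of_int n)) / of_int c"
  using assms by (simp add: field_simps)

lemma reduce:
  assumes ns: "\<forall>a::int. a^2 \<noteq> n" and lam: "lam \<in> {1,2}"
  shows "c \<noteq> 0 \<Longrightarrow> c dvd a^2 - n \<Longrightarrow> \<exists>g\<in>hecke_group lam. \<exists>a' c'. \<bar>a'\<bar> \<le> \<bar>n\<bar> \<and> \<bar>c'\<bar> \<le> \<bar>n\<bar> \<and>
     g ((of_int a + csqrt (of_int n)) / of_int c) = (of_int a' + csqrt (of_int n)) / of_int c'"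
proof (induction "nat \<bar>c\<bar>" arbitrary: a c rule: less_induct)
  case less
  let ?s = "csqrt (of_int n)"
  have n0: "n \<noteq> 0" using ns by (metis power_zero_numeral)
  have lampos: "lam \<ge> 1" "lam \<le> 2" using lam by auto
  define L where "L = lam * \<bar>c\<bar>"
  have Lpos: "L > 0" using lampos less.prems(1) unfolding L_def by simp
  define r where "r = a mod L"
  have r: "0 \<le> r" "r < L" using Lpos unfolding r_def by auto
  define a' where "a' = (if r \<le> \<bar>c\<bar> then r else r - L)"
  have L2: "L \<le> 2 * \<bar>c\<bar>" unfolding L_def using lampos(2) by (intro mult_right_mono) auto
  have a'b: "\<bar>a'\<bar> \<le> \<bar>c\<bar>"
  proof (cases "r \<le> \<bar>c\<bar>")
    case True then show ?thesis using r unfolding a'_def by simp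
  next
    case False then show ?thesis using r L2 unfolding a'_def by simp
  qed
  have dm: "a div L * L + r = a" unfolding r_def by (rule div_mult_mod_eq)
  have m: "r - a = L * (-(a div L))" using dm by (simp add: algebra_simps)
  have "L dvd a' - a"
  proof (cases "r \<le> \<bar>c\<bar>")
    case True
    then have "a' - a = L * (-(a div L))" using m unfolding a'_def by simp
    then show ?thesis by (rule dvdI)
  next
    case False
    then have "a' - a = L * (-(a div L) - 1)" using m unfolding a'_def by (simp add: algebra_simps)
    then show ?thesis by (rule dvdI)
  qed
  moreover have "lam * c dvd L" unfolding L_def by (simp add: abs_mult[symmetric] lampos(1))
  ultimately have "lam * c dvd a' - a" using dvd_trans by blast
  then obtain k where k: "a' - a = lam * c * k" by blast
  have a'eq: "a' = a + k * lam * c" using k by (simp add: algebra_simps)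
  have dv: "c dvd a'^2 - n"
  proof -
    have e: "a'^2 - n = (a^2 - n) + c * (2*a*k*lam + k^2*lam^2*c)" unfolding a'eq by (simp add: algebra_simps power2_eq_square)
    have d: "c dvd (a^2 - n) + c * (2*a*k*lam + k^2*lam^2*c)"
      using less.prems(2) by (intro dvd_add) auto
    show ?thesis by (subst e) (rule d)
  qed
  define b where "b = (a'^2 - n) div c"
  have bc: "b * c = a'^2 - n" unfolding b_def using dv by simp
  have z1: "(\<lambda>z. z + of_int (k*lam)) ((of_int a + ?s) / of_int c) = (of_int a' + ?s) / of_int c"
    using T_formula[OF less.prems(1)] a'eq by simp
  have Tin: "(\<lambda>z. z + of_int (k*lam)) \<in> hecke_group lam" by (rule trans_int)
  show ?case
  proof (cases "\<bar>b\<bar> \<ge> \<bar>c\<bar>")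
    case True
    have bd: "\<bar>c\<bar> \<le> \<bar>n\<bar> \<and> \<bar>a'\<bar> \<le> \<bar>n\<bar>" by (rule bound[OF less.prems(1) a'b bc True n0])
    show ?thesis
      apply (rule bexI[OF _ Tin])
      apply (rule exI[of _ a'], rule exI[of _ c])
      using bd z1 by simp
  next
    case False
    have b0: "b \<noteq> 0" using bc ns by auto
    have "b dvd (-a')^2 - n" using bc by (metis dvd_triv_left power2_minus)
    moreover have "nat \<bar>b\<bar> < nat \<bar>c\<bar>" using False by simp
    ultimately obtain g a'' c'' where g: "g \<in> hecke_group lam" "\<bar>a''\<bar> \<le> \<bar>n\<bar>" "\<bar>c''\<bar> \<le> \<bar>n\<bar>"
      "g ((of_int (-a') + ?s) / of_int b) = (of_int a'' + ?s) / of_int c''"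
      using less.hyps[of b "-a'"] b0 by blast
    have Sx: "(\<lambda>z. - 1 / z) ((of_int a' + ?s) / of_int c) = (of_int (-a') + ?s) / of_int b"
      using S_formula[OF ns less.prems(1) bc] by simp
    have G: "g \<circ> (\<lambda>z. - 1 / z) \<circ> (\<lambda>z. z + of_int (k*lam)) \<in> hecke_group lam"
      by (intro hg_comp g(1) gen_x Tin)
    have E: "(g \<circ> (\<lambda>z. - 1 / z) \<circ> (\<lambda>z. z + of_int (k*lam))) ((of_int a + ?s) / of_int c) = (of_int a'' + ?s) / of_int c''"
      using z1 Sx g(4) by simp
    show ?thesis
      apply (rule bexI[OF _ G])
      apply (rule exI[of _ a''], rule exI[of _ c''])
      using E g(2,3) by simp
  qed
qed


inductive_set pp :: "int \<Rightarrow> complex \<Rightarrow> (nat \<times> complex) set" for lam :: int and z0 :: complex where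
  pp0: "(0, z0) \<in> pp lam z0"
| pp1: "(t, y) \<in> pp lam z0 \<Longrightarrow> t \<noteq> 1 \<Longrightarrow> (1, - 1 / y) \<in> pp lam z0"
| pp2: "(t, y) \<in> pp lam z0 \<Longrightarrow> t \<noteq> 2 \<Longrightarrow> k \<noteq> 0 \<Longrightarrow> (2, y + of_int (k*lam)) \<in> pp lam z0"

definition "RR = {z::complex. 1 < Re z \<and> Re z < 2}"

lemma kl: fixes k lam :: int assumes "lam \<ge> 3" "k \<noteq> 0" shows "k*lam \<ge> 3 \<or> k*lam \<le> -3"
proof (cases "k > 0")
  case True then have "k*lam \<ge> 1*3" using assms by (intro mult_mono) auto
  then show ?thesis by simp
next
  case False then have "k \<le> -1" using assms by simp
  then have "(-k)*lam \<ge> 1*3" using assms by (intro mult_mono) auto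
  then show ?thesis by simp
qed

lemma regions:
  assumes lam: "lam \<ge> 3" and z0: "z0 \<in> RR"
  shows "(t, y) \<in> pp lam z0 \<Longrightarrow> (t = 0 \<and> y = z0) \<or> (t = 1 \<and> 0 < cmod y \<and> cmod y < 1)
       \<or> (t = 2 \<and> cmod y > 1 \<and> y \<notin> RR)"
proof (induction rule: pp.induct)
  case pp0 then show ?case by simp
next
  case (pp1 t y)
  have "cmod y > 1"
  proof -
    { assume "t = 0" "y = z0"
      then have "1 < Re y" using z0 unfolding RR_def by auto
      then have "cmod y > 1" using abs_Re_le_cmod[of y] by linarith }
    then show ?thesis using pp1 by auto
  qed
  then have "0 < cmod (- 1 / y)" "cmod (-1 / y) < 1" by (auto simp: norm_divide divide_less_eq)
  then show ?case by simp
next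
  case (pp2 t y k)
  have kk: "k*lam \<ge> 3 \<or> k*lam \<le> -3" using kl[OF lam pp2(3)] .
  have ry: "-1 < Re y \<and> Re y < 2"
  proof -
    { assume "t = 0" "y = z0"
      then have ?thesis using z0 unfolding RR_def by auto }
    moreover
    { assume "t = 1" "cmod y < 1"
      then have ?thesis using abs_Re_le_cmod[of y] by linarith }
    ultimately show ?thesis using pp2 by auto
  qed
  let ?w = "y + of_int (k*lam)"
  have rw: "Re ?w = Re y + of_int (k*lam)" by simp
  have "Re ?w > 2 \<or> Re ?w < -1"
  proof (cases "k*lam \<ge> 3")
    case True
    then have "real_of_int (k*lam) \<ge> 3" by linarith
    then show ?thesis using rw ry by linarith
  next
    case False
    then have "real_of_int (k*lam) \<le> -3" using kk by linarith
    then show ?thesis using rw ry by linarith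
  qed
  then have "cmod ?w > 1" "?w \<notin> RR" using abs_Re_le_cmod[of ?w] unfolding RR_def by auto
  then show ?case by simp
qed

lemma pp_closed:
  assumes "(t, y) \<in> pp lam z0"
  shows "\<exists>t'. (t', - 1 / y) \<in> pp lam z0" "\<exists>t'. (t', y + of_int lam) \<in> pp lam z0"
    "\<exists>t'. (t', y - of_int lam) \<in> pp lam z0"
proof -
  show "\<exists>t'. (t', - 1 / y) \<in> pp lam z0"
  proof (cases "t = 1")
    case True
    with assms obtain t0 y0 where "(t0, y0) \<in> pp lam z0" "y = - 1 / y0"
      by (cases rule: pp.cases) auto
    then show ?thesis by auto
  next
    case False then show ?thesis using pp.pp1[OF assms] by blast
  qed
  have gen: "\<exists>t'. (t', y + of_int (j*lam)) \<in> pp lam z0" if "j \<noteq> 0" for j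
  proof (cases "t = 2")
    case True
    with assms obtain t0 y0 k where h: "(t0, y0) \<in> pp lam z0" "t0 \<noteq> 2" "k \<noteq> 0" "y = y0 + of_int (k*lam)"
      by (cases rule: pp.cases) auto
    show ?thesis
    proof (cases "k + j = 0")
      case True
      then have "j = -k" by simp
      then have "y + of_int (j*lam) = y0" using h(4) by simp
      then show ?thesis using h(1) by auto
    next
      case False
      have "y + of_int (j*lam) = y0 + of_int ((k+j)*lam)" using h(4) by (simp add: algebra_simps)
      then show ?thesis using pp.pp2[OF h(1) h(2) False] by auto
    qed
  next
    case False then show ?thesis using pp.pp2[OF assms False that] by blast
  qed
  show "\<exists>t'. (t', y + of_int lam) \<in> pp lam z0" using gen[of 1] by simp
  show "\<exists>t'. (t', y - of_int lam) \<in> pp lam z0" using gen[of "-1"] by simp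
qed

lemma orbit_in_pp: "g \<in> hecke_group lam \<Longrightarrow> \<exists>t. (t, g z0) \<in> pp lam z0"
proof (induction g rule: hecke_group.induct)
  case hg_id then show ?case using pp.pp0 by auto
next
  case (hg_x g) then show ?case using pp_closed(1) by auto
next
  case (hg_w g) then show ?case using pp_closed(2) by auto
next
  case (hg_winv g) then show ?case using pp_closed(3) by auto
qed

lemma orbit_inj:
  assumes lam: "lam \<ge> 3" and z1: "z1 \<in> RR" and z2: "z2 \<in> RR"
    and eq: "hecke_orbit lam z1 = hecke_orbit lam z2"
  shows "z1 = z2"
proof -
  have "z2 \<in> hecke_orbit lam z2" unfolding hecke_orbit_def by (auto intro!: exI[of _ id] hecke_group.hg_id)
  then obtain g where g: "g \<in> hecke_group lam" "z2 = g z1" using eq unfolding hecke_orbit_def by auto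
  then obtain t where "(t, z2) \<in> pp lam z1" using orbit_in_pp by metis
  from regions[OF lam z1 this] z2 show ?thesis
    using abs_Re_le_cmod[of z2] unfolding RR_def by auto
qed


lemma fam_Qstar:
  assumes ns: "\<forall>a::int. a^2 \<noteq> n"
  shows "1 + 1 / (of_int r - csqrt (of_int n)) \<in> Qstar n"
proof -
  let ?s = "csqrt (of_int n)"
  define k where "k = r^2 - n"
  have k0: "k \<noteq> 0" using ns unfolding k_def by auto
  have p1: "of_int r + ?s \<noteq> 0" using nz[OF ns] .
  have p2: "of_int r - ?s \<noteq> 0" using nz[OF ns, of "-r"] by (simp add: algebra_simps)
  have kk: "(of_int k :: complex) = (of_int r + ?s) * (of_int r - ?s)"
    unfolding k_def by (simp add: algebra_simps power2_eq_square[symmetric])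
  have eq: "1 + 1 / (of_int r - ?s) = (of_int (k + r) + ?s) / of_int k"
    using p1 p2 kk k0 by (simp add: field_simps)
  have "(k + r)^2 - n = k * (k + 2*r + 1)" unfolding k_def by (simp add: power2_eq_square algebra_simps)
  then have dv: "k dvd (k + r)^2 - n" by simp
  show ?thesis unfolding Qstar_def using eq k0 dv by blast
qed

lemma fam_RR:
  assumes ns: "\<forall>a::int. a^2 \<noteq> n" and r: "r \<ge> \<bar>n\<bar> + 2"
  shows "1 + 1 / (of_int r - csqrt (of_int n)) \<in> RR"
proof -
  have "0 < Re (1 / (of_int r - csqrt (of_int n))) \<and> Re (1 / (of_int r - csqrt (of_int n))) < 1"
  proof (cases "n \<ge> 0")
    case True
    have s: "csqrt (of_int n) = of_real (sqrt (of_int n))" using True by simp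
    have n1: "n \<ge> 1" using True ns by (cases "n = 0") auto
    have "sqrt (of_int n) \<le> of_int n"
    proof -
      have "sqrt (of_int n) \<le> sqrt (of_int n * of_int n)" using n1 by (intro real_sqrt_le_mono) simp
      also have "\<dots> = of_int n" using True by simp
      finally show ?thesis .
    qed
    then have d: "of_int r - sqrt (of_int n) > 1" using r True by linarith
    have "of_int r - csqrt (of_int n) = of_real (of_int r - sqrt (of_int n))" using s by simp
    then have "Re (1 / (of_int r - csqrt (of_int n))) = 1 / (of_int r - sqrt (of_int n))" by simp
    then show ?thesis using d by (simp add: divide_less_eq)
  next
    case False
    have s: "csqrt (of_int n) = \<i> * sqrt \<bar>of_int n\<bar>" using False by simp
    define q where "q = sqrt \<bar>of_int n\<bar>"
    have q2: "q^2 = - of_int n" unfolding q_def using False by simp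
    have rr: "real_of_int r \<ge> 2" using r by linarith
    have "Re (1 / (of_int r - csqrt (of_int n))) = of_int r / ((of_int r)^2 + q^2)"
      unfolding s q_def[symmetric] by (simp add: Re_divide)
    moreover have lt: "of_int r < (of_int r)^2 + q^2"
    proof -
      have "real_of_int r * 1 < real_of_int r * real_of_int r" using rr by (intro mult_strict_left_mono) auto
      moreover have "0 \<le> q * q" by simp
      ultimately show ?thesis unfolding power2_eq_square by linarith
    qed
    moreover have pos: "0 < (of_int r)^2 + q^2" using lt rr by linarith
    ultimately show ?thesis using rr pos by (simp add: divide_less_eq)
  qed
  then show ?thesis unfolding RR_def by simp
qed

lemma fam_inj:
  assumes ns: "\<forall>a::int. a^2 \<noteq> n"
  shows "inj (\<lambda>r::int. 1 + 1 / (of_int r - csqrt (of_int n)))"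
proof (rule injI)
  fix x y :: int
  assume "1 + 1 / (of_int x - csqrt (of_int n)) = 1 + 1 / (of_int y - csqrt (of_int n))"
  then have "of_int x - csqrt (of_int n) = of_int y - csqrt (of_int n)" by simp
  then show "x = y" by simp
qed


theorem theorem1p4:
  fixes n lam :: int
  assumes "squarefree n" and "n \<noteq> 1" and "lam \<ge> 1"
  shows "finite (hecke_orbits n lam) \<longleftrightarrow> lam \<in> {1, 2}"
proof -
  have ns: "\<forall>a::int. a^2 \<noteq> n" using nonsq assms(1,2) by blast
  let ?s = "csqrt (of_int n)"
  show ?thesis
  proof
    assume fin: "finite (hecke_orbits n lam)"
    show "lam \<in> {1, 2}"
    proof (rule ccontr)
      assume "lam \<notin> {1, 2}"
      then have lam3: "lam \<ge> 3" using assms(3) by auto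
      define f where "f = (\<lambda>r::int. 1 + 1 / (of_int r - ?s))"
      define A where "A = {\<bar>n\<bar> + 2 ..}"
      have fA: "f ` A \<subseteq> Qstar n \<inter> RR" unfolding f_def A_def using fam_Qstar[OF ns] fam_RR[OF ns] by auto
      have "hecke_orbit lam ` (f ` A) \<subseteq> hecke_orbits n lam" unfolding hecke_orbits_def using fA by auto
      then have "finite (hecke_orbit lam ` (f ` A))" using fin finite_subset by blast
      moreover have "inj_on (hecke_orbit lam) (f ` A)"
      proof (rule inj_onI)
        fix u v assume "u \<in> f ` A" "v \<in> f ` A" "hecke_orbit lam u = hecke_orbit lam v"
        then show "u = v" using fA orbit_inj[OF lam3] by blast
      qed
      ultimately have "finite (f ` A)" using finite_imageD by blast
      moreover have "inj_on f A" using fam_inj[OF ns] unfolding f_def by (simp add: inj_on_def inj_def)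
      ultimately have "finite A" using finite_imageD by blast
      moreover have "infinite A" unfolding A_def by (simp add: infinite_Ici)
      ultimately show False by blast
    qed
  next
    assume lam: "lam \<in> {1, 2}"
    define F where "F = (\<lambda>(a, c). (of_int a + ?s) / of_int c) ` ({-\<bar>n\<bar>..\<bar>n\<bar>} \<times> {-\<bar>n\<bar>..\<bar>n\<bar>})"
    have "finite F" unfolding F_def by simp
    have "hecke_orbits n lam \<subseteq> hecke_orbit lam ` F"
    proof
      fix Y assume "Y \<in> hecke_orbits n lam"
      then obtain a c where ac: "Y = hecke_orbit lam ((of_int a + ?s) / of_int c)" "c \<noteq> 0" "c dvd a^2 - n"
        unfolding hecke_orbits_def Qstar_def by auto
      obtain g a' c' where g: "g \<in> hecke_group lam" "\<bar>a'\<bar> \<le> \<bar>n\<bar>" "\<bar>c'\<bar> \<le> \<bar>n\<bar>"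
        "g ((of_int a + ?s) / of_int c) = (of_int a' + ?s) / of_int c'"
        using reduce[OF ns lam ac(2,3)] by blast
      have "Y = hecke_orbit lam ((of_int a' + ?s) / of_int c')" using ac(1) orbit_eq[OF g(1)] g(4) by metis
      moreover have "(of_int a' + ?s) / of_int c' \<in> F" unfolding F_def using g(2,3) by force
      ultimately show "Y \<in> hecke_orbit lam ` F" by blast
    qed
    then show "finite (hecke_orbits n lam)" using \<open>finite F\<close> finite_subset by blast
  qed
qed

end
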